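(* Let $\langle E,\rightarrow\rangle$ be a computation and $b$ a regular predicate, and let $S$ denote the slice of $\langle E,\rightarrow\rangle$ with respect to $b$. Then: (1) $\mathrm{possibly}(b)$ holds iff $S$ has at least two strongly connected components; (2) $\mathrm{invariant}(b)$ holds iff $S$ and $\langle E,\rightarrow\rangle$ have the same set of consistent cuts; (3) $\mathrm{controllable}(b)$ holds iff $S$ has the same number of strongly connected components as $\langle E,\rightarrow\rangle$.
   Context: A computation is a directed graph $\langle E, \rightarrow\rangle$ whose vertices (events) are partitioned among processes, each with an initial and final event, whose path relation contains Lamport's happened-before relation, with all initial events in one strongly connected component and all final events in one. A vertex subset $C$ is a consistent cut if for every edge $(u,v)$, $v\in C$ implies $u\in C$; $\emptyset$ and $E$ are trivial. A predicate is evaluated on non-trivial consistent cuts; it is regular if whenever consistent cuts $C_1,C_2$ satisfy it, so do $C_1\cap C_2$ and $C_1\cup C_2$. The slice with respect to $b$ is a directed graph on $E$ whose consistent cuts include every consistent cut of the computation satisfying $b$ and which has the fewest consistent cuts among all such graphs. Modalities: $\mathrm{possibly}(b)$ holds if some non-trivial consistent cut of the computation satisfies $b$; $\mathrm{invariant}(b)$ holds if every non-trivial consistent cut satisfies $b$; $\mathrm{controllable}(b)$ holds if there is a maximal chain $\emptyset=C_0\subset C_1\subset\dots\subset C_m=E$ in the lattice of consistent cuts of the computation (ordered by inclusion) such that every non-trivial $C_j$ satisfies $b$. *)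

theory Defs
  imports Main
begin

(* A computation: events E, edge relation R on E, processes ps (each process is
   the list of its events in process order; hd = initial event, last = final event),
   and messages msgs (send, receive) pairs used to define Lamport's happened-before. *)

definition proc_order :: "'a list list \<Rightarrow> ('a \<times> 'a) set" where
  "proc_order ps = {(xs ! j, xs ! k) | xs j k. xs \<in> set ps \<and> j < k \<and> k < length xs}"

definition happened_before :: "'a list list \<Rightarrow> ('a \<times> 'a) set \<Rightarrow> ('a \<times> 'a) set" where
  "happened_before ps msgs = (proc_order ps \<union> msgs)\<^sup>+"

definition computation ::
  "'a set \<Rightarrow> ('a \<times> 'a) set \<Rightarrow> 'a list list \<Rightarrow> ('a \<times> 'a) set \<Rightarrow> bool" where
  "computation E R ps msgs \<longleftrightarrow>
     R \<subseteq> E \<times> E \<and>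
     ps \<noteq> [] \<and> (\<forall>xs\<in>set ps. xs \<noteq> []) \<and>
     distinct (concat ps) \<and> set (concat ps) = E \<and>
     msgs \<subseteq> E \<times> E \<and>
     happened_before ps msgs \<subseteq> R\<^sup>+ \<and>
     (\<forall>x\<in>hd ` set ps. \<forall>y\<in>hd ` set ps. (x, y) \<in> R\<^sup>*) \<and>
     (\<forall>x\<in>last ` set ps. \<forall>y\<in>last ` set ps. (x, y) \<in> R\<^sup>*)"

definition cuts :: "'a set \<Rightarrow> ('a \<times> 'a) set \<Rightarrow> 'a set set" where
  "cuts E R = {C. C \<subseteq> E \<and> (\<forall>(u, v)\<in>R. v \<in> C \<longrightarrow> u \<in> C)}"

definition nontrivial_cut :: "'a set \<Rightarrow> ('a \<times> 'a) set \<Rightarrow> 'a set \<Rightarrow> bool" where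
  "nontrivial_cut E R C \<longleftrightarrow> C \<in> cuts E R \<and> C \<noteq> {} \<and> C \<noteq> E"

definition regular :: "'a set \<Rightarrow> ('a \<times> 'a) set \<Rightarrow> ('a set \<Rightarrow> bool) \<Rightarrow> bool" where
  "regular E R b \<longleftrightarrow>
     (\<forall>C1 C2. nontrivial_cut E R C1 \<longrightarrow> nontrivial_cut E R C2 \<longrightarrow> b C1 \<longrightarrow> b C2 \<longrightarrow>
        b (C1 \<inter> C2) \<and> b (C1 \<union> C2))"

definition is_slice ::
  "'a set \<Rightarrow> ('a \<times> 'a) set \<Rightarrow> ('a set \<Rightarrow> bool) \<Rightarrow> ('a \<times> 'a) set \<Rightarrow> bool" where
  "is_slice E R b S \<longleftrightarrow>
     S \<subseteq> E \<times> E \<and>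
     {C. nontrivial_cut E R C \<and> b C} \<subseteq> cuts E S \<and>
     (\<forall>S'. S' \<subseteq> E \<times> E \<longrightarrow> {C. nontrivial_cut E R C \<and> b C} \<subseteq> cuts E S' \<longrightarrow>
        card (cuts E S) \<le> card (cuts E S'))"

definition sccs :: "'a set \<Rightarrow> ('a \<times> 'a) set \<Rightarrow> 'a set set" where
  "sccs E R = (\<lambda>u. {v \<in> E. (u, v) \<in> R\<^sup>* \<and> (v, u) \<in> R\<^sup>*}) ` E"

definition possibly :: "'a set \<Rightarrow> ('a \<times> 'a) set \<Rightarrow> ('a set \<Rightarrow> bool) \<Rightarrow> bool" where
  "possibly E R b \<longleftrightarrow> (\<exists>C. nontrivial_cut E R C \<and> b C)"

definition invariant :: "'a set \<Rightarrow> ('a \<times> 'a) set \<Rightarrow> ('a set \<Rightarrow> bool) \<Rightarrow> bool" where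
  "invariant E R b \<longleftrightarrow> (\<forall>C. nontrivial_cut E R C \<longrightarrow> b C)"

definition maximal_chain :: "'a set \<Rightarrow> ('a \<times> 'a) set \<Rightarrow> 'a set list \<Rightarrow> bool" where
  "maximal_chain E R Cs \<longleftrightarrow>
     Cs \<noteq> [] \<and> hd Cs = {} \<and> last Cs = E \<and>
     (\<forall>j < length Cs. Cs ! j \<in> cuts E R) \<and>
     (\<forall>j. Suc j < length Cs \<longrightarrow> Cs ! j \<subset> Cs ! Suc j \<and>
        \<not> (\<exists>D\<in>cuts E R. Cs ! j \<subset> D \<and> D \<subset> Cs ! Suc j))"

definition controllable :: "'a set \<Rightarrow> ('a \<times> 'a) set \<Rightarrow> ('a set \<Rightarrow> bool) \<Rightarrow> bool" where
  "controllable E R b \<longleftrightarrow>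
     (\<exists>Cs. maximal_chain E R Cs \<and>
        (\<forall>j < length Cs. Cs ! j \<noteq> {} \<and> Cs ! j \<noteq> E \<longrightarrow> b (Cs ! j)))"

end

theory Submission
  imports Defs
begin


definition scc_of :: "'a set \<Rightarrow> ('a \<times> 'a) set \<Rightarrow> 'a \<Rightarrow> 'a set" where
  "scc_of E T u = {v\<in>E. (u,v)\<in>T\<^sup>* \<and> (v,u)\<in>T\<^sup>*}"

definition gc :: "'a set \<Rightarrow> ('a \<times> 'a) set \<Rightarrow> 'a set \<Rightarrow> nat" where
  "gc E T C = card (scc_of E T ` C)"

lemma sccs_eq: "sccs E T = scc_of E T ` E"
  by (simp add: sccs_def scc_of_def)

lemma cut_back:
  assumes "C \<in> cuts E T" "(w,u) \<in> T\<^sup>*" "u \<in> C" shows "w \<in> C"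
  using assms(2,3)
proof (induction rule: converse_rtrancl_induct)
  case base then show ?case .
next
  case (step y z)
  then show ?case using assms(1) by (auto simp: cuts_def)
qed

lemma scc_same: "v \<in> scc_of E T u \<Longrightarrow> scc_of E T v = scc_of E T u"
  unfolding scc_of_def by (auto intro: rtrancl_trans)

lemma scc_notin:
  assumes "C \<in> cuts E T" "v \<in> E" "v \<notin> C"
  shows "scc_of E T v \<notin> scc_of E T ` C"
proof
  assume "scc_of E T v \<in> scc_of E T ` C"
  then obtain u where u: "u \<in> C" "scc_of E T v = scc_of E T u" by auto
  have "v \<in> scc_of E T v" using assms(2) by (simp add: scc_of_def)
  then have "v \<in> scc_of E T u" using u by simp
  then have "(v,u) \<in> T\<^sup>*" by (simp add: scc_of_def)
  then have "v \<in> C" using cut_back[OF assms(1)] u by blast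
  then show False using assms by blast
qed

lemma g_strict:
  assumes "finite E" "C \<in> cuts E T" "D \<in> cuts E T" "C \<subset> D"
  shows "gc E T C < gc E T D"
proof -
  obtain v where v: "v \<in> D" "v \<notin> C" using assms(4) by blast
  have vE: "v \<in> E" using v assms(3) by (auto simp: cuts_def)
  have s1: "scc_of E T ` C \<subseteq> scc_of E T ` D"
    using assms(4) by (intro image_mono) blast
  have s2: "scc_of E T v \<in> scc_of E T ` D" using v(1) by (rule imageI)
  have n: "scc_of E T v \<notin> scc_of E T ` C" by (rule scc_notin[OF assms(2) vE v(2)])
  have "scc_of E T ` C \<noteq> scc_of E T ` D"
  proof
    assume eq: "scc_of E T ` C = scc_of E T ` D"
    show False using n s2 unfolding eq by (rule notE)
  qed
  then have "scc_of E T ` C \<subset> scc_of E T ` D"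
    using s1 by (rule psubsetI[rotated])
  moreover have "finite (scc_of E T ` D)" using assms(1,3)
    unfolding cuts_def by (intro finite_imageI) (auto intro: finite_subset)
  ultimately show ?thesis unfolding gc_def by (simp add: psubset_card_mono)
qed

lemma dn_cut:
  assumes "T \<subseteq> E \<times> E" "C \<in> cuts E T"
  shows "C \<union> {u\<in>E. (u,w)\<in>T\<^sup>*} \<in> cuts E T"
  using assms unfolding cuts_def
  by (auto intro: converse_rtrancl_into_rtrancl)

lemma g_cover:
  assumes "finite E" "T \<subseteq> E \<times> E" "C \<in> cuts E T" "D \<in> cuts E T" "C \<subset> D"
    and nb: "\<not> (\<exists>D'\<in>cuts E T. C \<subset> D' \<and> D' \<subset> D)"
  shows "gc E T D = Suc (gc E T C)"
proof -
  have DE: "D \<subseteq> E" using assms(4) by (simp add: cuts_def)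
  have eqD: "C \<union> {u\<in>E. (u,w)\<in>T\<^sup>*} = D" if w: "w \<in> D" "w \<notin> C" for w
  proof -
    have c: "C \<union> {u\<in>E. (u,w)\<in>T\<^sup>*} \<in> cuts E T" by (rule dn_cut[OF assms(2,3)])
    have s: "C \<union> {u\<in>E. (u,w)\<in>T\<^sup>*} \<subseteq> D"
      using assms(5) cut_back[OF assms(4)] w by blast
    have "w \<in> E" using w DE by blast
    then have "C \<subset> C \<union> {u\<in>E. (u,w)\<in>T\<^sup>*}" using w by blast
    then show ?thesis using nb c s by blast
  qed
  obtain v where v: "v \<in> D" "v \<notin> C" using assms(5) by blast
  have vE: "v \<in> E" using v DE by blast
  have "scc_of E T ` D = insert (scc_of E T v) (scc_of E T ` C)"
  proof
    have s1: "scc_of E T ` C \<subseteq> scc_of E T ` D"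
      using assms(5) by (intro image_mono) blast
    show "insert (scc_of E T v) (scc_of E T ` C) \<subseteq> scc_of E T ` D"
      using imageI[OF v(1), of "scc_of E T"] s1 by blast
  next
    show "scc_of E T ` D \<subseteq> insert (scc_of E T v) (scc_of E T ` C)"
    proof
      fix X assume "X \<in> scc_of E T ` D"
      then obtain w where w: "w \<in> D" "X = scc_of E T w" by blast
      show "X \<in> insert (scc_of E T v) (scc_of E T ` C)"
      proof (cases "w \<in> C")
        case True then show ?thesis using w by blast
      next
        case False
        have "w \<in> C \<union> {u\<in>E. (u,v)\<in>T\<^sup>*}" using eqD[OF v] w by blast
        then have 1: "(w,v) \<in> T\<^sup>*" using False by blast
        have "v \<in> C \<union> {u\<in>E. (u,w)\<in>T\<^sup>*}" using eqD[OF w(1) False] v by blast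
        then have 2: "(v,w) \<in> T\<^sup>*" using v by blast
        have "w \<in> scc_of E T v" using 1 2 w DE by (auto simp: scc_of_def)
        then have "X = scc_of E T v" using scc_same w(2) by metis
        then show ?thesis by simp
      qed
    qed
  qed
  moreover have "finite (scc_of E T ` C)" using assms(1,3)
    unfolding cuts_def by (intro finite_imageI) (auto intro: finite_subset)
  ultimately show ?thesis unfolding gc_def using scc_notin[OF assms(3) vE v(2)] by simp
qed

lemma g_empty: "gc E T {} = 0" by (simp add: gc_def)
lemma g_E: "gc E T E = card (sccs E T)" by (simp add: gc_def sccs_eq)

lemma chain_len:
  assumes "finite E" "T \<subseteq> E \<times> E" "maximal_chain E T Cs"
  shows "length Cs = Suc (card (sccs E T))"
proof -
  have ne: "Cs \<noteq> []" and h: "hd Cs = {}" and l: "last Cs = E"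
    and c: "\<forall>j < length Cs. Cs ! j \<in> cuts E T"
    and st: "\<forall>j. Suc j < length Cs \<longrightarrow> Cs ! j \<subset> Cs ! Suc j \<and>
        \<not> (\<exists>D\<in>cuts E T. Cs ! j \<subset> D \<and> D \<subset> Cs ! Suc j)"
    using assms(3) unfolding maximal_chain_def by blast+
  have "k < length Cs \<longrightarrow> gc E T (Cs ! k) = k" for k
  proof (induction k)
    case 0 then show ?case using ne h by (simp add: hd_conv_nth g_empty)
  next
    case (Suc k)
    show ?case
    proof
      assume k: "Suc k < length Cs"
      then have "gc E T (Cs ! Suc k) = Suc (gc E T (Cs ! k))"
        using g_cover[OF assms(1,2)] c st by simp
      then show "gc E T (Cs ! Suc k) = Suc k" using Suc k by simp
    qed
  qed
  then have "gc E T (Cs ! (length Cs - 1)) = length Cs - 1" using ne by simp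
  moreover have "Cs ! (length Cs - 1) = E" using l ne by (simp add: last_conv_nth)
  ultimately have "card (sccs E T) = length Cs - 1" using g_E[of E T] by simp
  then show ?thesis using ne by simp
qed

lemma chain_bound:
  assumes "finite E" "Cs \<noteq> []" "hd Cs = {}" "last Cs = E"
    and c: "\<forall>k < length Cs. Cs ! k \<in> cuts E T"
    and st: "\<forall>j. Suc j < length Cs \<longrightarrow> Cs ! j \<subset> Cs ! Suc j"
    and j: "Suc j < length Cs" and D: "D \<in> cuts E T" "Cs ! j \<subset> D" "D \<subset> Cs ! Suc j"
  shows "length Cs \<le> card (sccs E T)"
proof -
  have "k < length Cs \<longrightarrow> k + (if j < k then 1 else 0) \<le> gc E T (Cs ! k)" for k
  proof (induction k)
    case 0 then show ?case by simp
  next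
    case (Suc k)
    show ?case
    proof
      assume k: "Suc k < length Cs"
      have lt: "gc E T (Cs ! k) < gc E T (Cs ! Suc k)"
        using g_strict[OF assms(1), of "Cs ! k" T "Cs ! Suc k"] c st k by simp
      show "Suc k + (if j < Suc k then 1 else 0) \<le> gc E T (Cs ! Suc k)"
      proof (cases "k = j")
        case True
        have ck: "Cs ! k \<in> cuts E T" "Cs ! Suc k \<in> cuts E T" using c k by auto
        have "gc E T (Cs ! k) < gc E T D"
          using g_strict[OF assms(1) ck(1) D(1)] D(2) True by simp
        moreover have "gc E T D < gc E T (Cs ! Suc k)"
          using g_strict[OF assms(1) D(1) ck(2)] D(3) True by simp
        ultimately have "Suc (Suc (gc E T (Cs ! k))) \<le> gc E T (Cs ! Suc k)" by simp
        moreover have "k \<le> gc E T (Cs ! k)" using Suc k by simp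
        ultimately show ?thesis using True by simp
      next
        case False
        have "k + (if j < k then 1 else 0) \<le> gc E T (Cs ! k)" using Suc k by simp
        then show ?thesis using False lt by auto
      qed
    qed
  qed
  note H = this[of "length Cs - 1"]
  have j1: "j < length Cs - 1" "length Cs - 1 < length Cs" using j by auto
  have "length Cs - 1 + 1 \<le> gc E T (Cs ! (length Cs - 1))" using H j1 by simp
  moreover have "Cs ! (length Cs - 1) = E" using assms(2,4) by (simp add: last_conv_nth)
  ultimately show ?thesis using g_E[of E T] j1 by simp
qed



lemma chain_exists_gen:
  assumes "finite E" "C \<in> cuts E T"
  shows "\<exists>Cs. Cs \<noteq> [] \<and> hd Cs = {} \<and> last Cs = C \<and>
     (\<forall>j < length Cs. Cs ! j \<in> cuts E T) \<and>
     (\<forall>j. Suc j < length Cs \<longrightarrow> Cs ! j \<subset> Cs ! Suc j \<and>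
        \<not> (\<exists>D\<in>cuts E T. Cs ! j \<subset> D \<and> D \<subset> Cs ! Suc j))"
  using assms(2)
proof (induction "card C" arbitrary: C rule: less_induct)
  case less
  have CE: "C \<subseteq> E" using less.prems by (simp add: cuts_def)
  show ?case
  proof (cases "C = {}")
    case True
    then show ?thesis by (intro exI[of _ "[{}]"]) (use less.prems in simp)
  next
    case False
    define P where "P = {D \<in> cuts E T. D \<subset> C}"
    have "{} \<in> cuts E T" by (simp add: cuts_def)
    then have "{} \<in> P" using False by (auto simp: P_def)
    moreover have "finite P"
    proof -
      have "P \<subseteq> Pow E" using CE unfolding P_def by blast
      then show ?thesis using assms(1) finite_subset by blast
    qed
    ultimately obtain D where D: "D \<in> P" and Dmax: "\<forall>D'\<in>P. D \<subseteq> D' \<longrightarrow> D = D'"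
      using finite_has_maximal[of P] by blast
    have Dc: "D \<in> cuts E T" and DC: "D \<subset> C" using D by (auto simp: P_def)
    have nb: "\<not> (\<exists>D'\<in>cuts E T. D \<subset> D' \<and> D' \<subset> C)"
    proof
      assume "\<exists>D'\<in>cuts E T. D \<subset> D' \<and> D' \<subset> C"
      then obtain D' where D': "D' \<in> cuts E T" "D \<subset> D'" "D' \<subset> C" by blast
      then have "D' \<in> P" by (simp add: P_def)
      then have "D = D'" using Dmax D'(2) by auto
      then show False using D'(2) by simp
    qed
    have fC: "finite C" using CE assms(1) by (rule finite_subset)
    have "card D < card C" by (rule psubset_card_mono[OF fC DC])
    from less.hyps[OF this Dc] obtain Cs where Cs: "Cs \<noteq> []" "hd Cs = {}" "last Cs = D"
      "\<forall>j < length Cs. Cs ! j \<in> cuts E T"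
      "\<forall>j. Suc j < length Cs \<longrightarrow> Cs ! j \<subset> Cs ! Suc j \<and>
        \<not> (\<exists>D\<in>cuts E T. Cs ! j \<subset> D \<and> D \<subset> Cs ! Suc j)"
      by blast
    have A1: "\<forall>j < length (Cs @ [C]). (Cs @ [C]) ! j \<in> cuts E T"
    proof (intro allI impI)
      fix j assume "j < length (Cs @ [C])"
      then show "(Cs @ [C]) ! j \<in> cuts E T" using Cs(4) less.prems
        by (cases "j < length Cs") (auto simp: nth_append)
    qed
    have A2: "\<forall>j. Suc j < length (Cs @ [C]) \<longrightarrow> (Cs @ [C]) ! j \<subset> (Cs @ [C]) ! Suc j \<and>
        \<not> (\<exists>D\<in>cuts E T. (Cs @ [C]) ! j \<subset> D \<and> D \<subset> (Cs @ [C]) ! Suc j)"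
    proof (intro allI impI)
      fix j assume j: "Suc j < length (Cs @ [C])"
      show "(Cs @ [C]) ! j \<subset> (Cs @ [C]) ! Suc j \<and>
        \<not> (\<exists>D\<in>cuts E T. (Cs @ [C]) ! j \<subset> D \<and> D \<subset> (Cs @ [C]) ! Suc j)"
      proof (cases "Suc j < length Cs")
        case True
        then show ?thesis using Cs(5) by (simp add: nth_append)
      next
        case False
        then have jl: "j = length Cs - 1" "Suc j = length Cs" using j by auto
        have "(Cs @ [C]) ! j = D" using jl Cs(1,3) by (simp add: nth_append last_conv_nth)
        moreover have "(Cs @ [C]) ! Suc j = C" using jl by simp
        ultimately show ?thesis using DC nb by simp
      qed
    qed
    have A0: "Cs @ [C] \<noteq> [] \<and> hd (Cs @ [C]) = {} \<and> last (Cs @ [C]) = C" using Cs by simp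
    show ?thesis using A0 A1 A2 by blast
  qed
qed

lemma chain_exists:
  assumes "finite E" "T \<subseteq> E \<times> E"
  shows "\<exists>Cs. maximal_chain E T Cs"
proof -
  have "E \<in> cuts E T" using assms(2) by (auto simp: cuts_def)
  then show ?thesis using chain_exists_gen[OF assms(1)] unfolding maximal_chain_def by blast
qed



lemma Inter_closed:
  assumes "finite F" "F \<noteq> {}" "F \<subseteq> K" and cl: "\<And>X Y. X \<in> K \<Longrightarrow> Y \<in> K \<Longrightarrow> X \<inter> Y \<in> K"
  shows "\<Inter>F \<in> K"
  using assms(1,2,3)
proof (induction F rule: finite_ne_induct)
  case (singleton x) then show ?case by simp
next
  case (insert x F) then show ?case using cl by simp
qed

lemma Union_closed:
  assumes "finite F" "F \<subseteq> K" "{} \<in> K" and cl: "\<And>X Y. X \<in> K \<Longrightarrow> Y \<in> K \<Longrightarrow> X \<union> Y \<in> K"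
  shows "\<Union>F \<in> K"
  using assms(1,2)
proof (induction F rule: finite_induct)
  case empty then show ?case using assms(3) by simp
next
  case (insert x F) then show ?case using cl by simp
qed

lemma birkhoff:
  assumes fin: "finite E" and KP: "K \<subseteq> Pow E" and e: "{} \<in> K" and EK: "E \<in> K"
    and ci: "\<And>X Y. X \<in> K \<Longrightarrow> Y \<in> K \<Longrightarrow> X \<inter> Y \<in> K"
    and cu: "\<And>X Y. X \<in> K \<Longrightarrow> Y \<in> K \<Longrightarrow> X \<union> Y \<in> K"
  shows "cuts E {(u,v). u \<in> E \<and> v \<in> E \<and> (\<forall>C\<in>K. v \<in> C \<longrightarrow> u \<in> C)} = K"
    (is "cuts E ?S = K")
proof
  show "K \<subseteq> cuts E ?S"
  proof
    fix C assume C: "C \<in> K"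
    then have "C \<subseteq> E" using KP by blast
    then show "C \<in> cuts E ?S" using C unfolding cuts_def by blast
  qed
next
  show "cuts E ?S \<subseteq> K"
  proof
    fix D assume D: "D \<in> cuts E ?S"
    have DE: "D \<subseteq> E" using D by (simp add: cuts_def)
    define J where "J v = \<Inter>{C\<in>K. v \<in> C}" for v
    have finK: "finite K" using KP fin by (meson finite_Pow_iff finite_subset)
    have JK: "J v \<in> K" if "v \<in> E" for v
    proof -
      have "E \<in> {C\<in>K. v \<in> C}" using EK that by simp
      then have "{C\<in>K. v \<in> C} \<noteq> {}" by blast
      moreover have "finite {C\<in>K. v \<in> C}" using finK by simp
      ultimately show ?thesis unfolding J_def by (intro Inter_closed[OF _ _ _ ci]) auto
    qed
    have "D = \<Union>(J ` D)"
    proof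
      show "D \<subseteq> \<Union>(J ` D)" unfolding J_def by blast
    next
      show "\<Union>(J ` D) \<subseteq> D"
      proof
        fix u assume "u \<in> \<Union>(J ` D)"
        then obtain v where v: "v \<in> D" "u \<in> J v" by blast
        have vE: "v \<in> E" using v DE by blast
        have "J v \<subseteq> E" using JK[OF vE] KP by blast
        then have uE: "u \<in> E" using v by blast
        have "\<forall>C\<in>K. v \<in> C \<longrightarrow> u \<in> C" using v(2) unfolding J_def by blast
        then have "(u,v) \<in> ?S" using uE vE by blast
        then show "u \<in> D" using D v(1) unfolding cuts_def by blast
      qed
    qed
    moreover have "\<Union>(J ` D) \<in> K"
      using fin DE JK by (intro Union_closed[OF _ _ e cu]) (auto intro: finite_subset)
    ultimately show "D \<in> K" by simp
  qed
qed

lemma cuts_int: "X \<in> cuts E R \<Longrightarrow> Y \<in> cuts E R \<Longrightarrow> X \<inter> Y \<in> cuts E R"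
  unfolding cuts_def by blast
lemma cuts_un: "X \<in> cuts E R \<Longrightarrow> Y \<in> cuts E R \<Longrightarrow> X \<union> Y \<in> cuts E R"
  unfolding cuts_def by blast
lemma cuts_empty: "{} \<in> cuts E R" unfolding cuts_def by blast
lemma cuts_E: "R \<subseteq> E \<times> E \<Longrightarrow> E \<in> cuts E R" unfolding cuts_def by blast
lemma finite_cuts: "finite E \<Longrightarrow> finite (cuts E R)"
  unfolding cuts_def by (rule finite_subset[of _ "Pow E"]) auto

lemma slice_cuts:
  assumes fin: "finite E" and RE: "R \<subseteq> E \<times> E" and reg: "regular E R b"
    and sl: "is_slice E R b S"
  shows "cuts E S = {C. nontrivial_cut E R C \<and> b C} \<union> {{}, E}"
proof -
  define K where "K = {C. nontrivial_cut E R C \<and> b C} \<union> {{}, E}"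
  have SE: "S \<subseteq> E \<times> E" and sub: "{C. nontrivial_cut E R C \<and> b C} \<subseteq> cuts E S"
    and mn: "\<And>S'. S' \<subseteq> E \<times> E \<Longrightarrow> {C. nontrivial_cut E R C \<and> b C} \<subseteq> cuts E S' \<Longrightarrow>
        card (cuts E S) \<le> card (cuts E S')"
    using sl unfolding is_slice_def by blast+
  have KS: "K \<subseteq> cuts E S" using sub cuts_empty cuts_E[OF SE] unfolding K_def by blast
  have KR: "K \<subseteq> cuts E R" using cuts_empty cuts_E[OF RE] unfolding K_def nontrivial_cut_def by blast
  have KP: "K \<subseteq> Pow E" using KR unfolding cuts_def by blast
  have ci: "X \<inter> Y \<in> K" if X: "X \<in> K" and Y: "Y \<in> K" for X Y
  proof -
    have c: "X \<inter> Y \<in> cuts E R" using X Y KR cuts_int by blast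
    show ?thesis
    proof (cases "X = {} \<or> Y = {} \<or> X = E \<or> Y = E")
      case True
      then show ?thesis using X Y KP unfolding K_def by (auto simp: Int_absorb1 Int_absorb2)
    next
      case False
      then have "nontrivial_cut E R X \<and> b X" "nontrivial_cut E R Y \<and> b Y" using X Y unfolding K_def by auto
      then have bb: "b (X \<inter> Y)" using reg unfolding regular_def by blast
      have "X \<inter> Y \<noteq> E" using False X KP by blast
      then show ?thesis using bb c unfolding K_def nontrivial_cut_def by auto
    qed
  qed
  have cu: "X \<union> Y \<in> K" if X: "X \<in> K" and Y: "Y \<in> K" for X Y
  proof -
    have c: "X \<union> Y \<in> cuts E R" using X Y KR cuts_un by blast
    show ?thesis
    proof (cases "X = {} \<or> Y = {} \<or> X = E \<or> Y = E")
      case True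
      then show ?thesis using X Y KP unfolding K_def by (auto simp: Un_absorb1 Un_absorb2)
    next
      case False
      then have "nontrivial_cut E R X \<and> b X" "nontrivial_cut E R Y \<and> b Y" using X Y unfolding K_def by auto
      then have bb: "b (X \<union> Y)" using reg unfolding regular_def by blast
      have "X \<union> Y \<noteq> {}" using False by blast
      then show ?thesis using bb c unfolding K_def nontrivial_cut_def by auto
    qed
  qed
  define S' where "S' = {(u,v). u \<in> E \<and> v \<in> E \<and> (\<forall>C\<in>K. v \<in> C \<longrightarrow> u \<in> C)}"
  have cS': "cuts E S' = K" unfolding S'_def
    by (rule birkhoff[OF fin KP _ _ ci cu]) (auto simp: K_def)
  have "S' \<subseteq> E \<times> E" unfolding S'_def by blast
  moreover have "{C. nontrivial_cut E R C \<and> b C} \<subseteq> cuts E S'" using cS' unfolding K_def by blast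
  ultimately have le: "card (cuts E S) \<le> card K" using mn cS' by metis
  have fS: "finite (cuts E S)" using fin by (rule finite_cuts)
  have "K = cuts E S" by (rule card_seteq[OF fS KS le])
  then have "cuts E S = K" by simp
  then show ?thesis unfolding K_def .
qed



theorem theorem12:
  fixes E :: "'a set" and R S msgs :: "('a \<times> 'a) set" and ps :: "'a list list"
    and b :: "'a set \<Rightarrow> bool"
  assumes "computation E R ps msgs"
    and "regular E R b"
    and "is_slice E R b S"
  shows "(possibly E R b \<longleftrightarrow> card (sccs E S) \<ge> 2) \<and>
         (invariant E R b \<longleftrightarrow> cuts E S = cuts E R) \<and>
         (controllable E R b \<longleftrightarrow> card (sccs E S) = card (sccs E R))"
proof -
  have RE: "R \<subseteq> E \<times> E" using assms(1) by (simp add: computation_def)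
  have Eps: "set (concat ps) = E" using assms(1) by (simp add: computation_def)
  have psne: "ps \<noteq> []" using assms(1) by (simp add: computation_def)
  have xsne: "\<forall>xs\<in>set ps. xs \<noteq> []" using assms(1) by (simp add: computation_def)
  have fin: "finite E" unfolding Eps[symmetric] by (rule List.finite_set)
  have Ene: "E \<noteq> {}"
  proof -
    obtain xs where xs: "xs \<in> set ps" using psne by (cases ps) auto
    then have "xs \<noteq> []" using xsne by blast
    then obtain x where "x \<in> set xs" by (cases xs) auto
    then have "x \<in> set (concat ps)" using xs by auto
    then show ?thesis using Eps by auto
  qed
  have SE: "S \<subseteq> E \<times> E" using assms(3) by (simp add: is_slice_def)
  define K where "K = {C. nontrivial_cut E R C \<and> b C} \<union> {{}, E}"
  have cS: "cuts E S = K" unfolding K_def by (rule slice_cuts[OF fin RE assms(2,3)])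
  have KR: "K \<subseteq> cuts E R" using cuts_empty cuts_E[OF RE] unfolding K_def nontrivial_cut_def by blast
  have E0: "{} \<subset> E" using Ene by blast
  have cSE: "{} \<in> cuts E S" "E \<in> cuts E S" using cuts_empty cuts_E[OF SE] by auto

  have P1: "possibly E R b \<longleftrightarrow> card (sccs E S) \<ge> 2"
  proof
    assume "possibly E R b"
    then obtain C where C: "nontrivial_cut E R C" "b C" unfolding possibly_def by blast
    have CS: "C \<in> cuts E S" using C cS unfolding K_def by blast
    have CE: "C \<subseteq> E" using CS by (simp add: cuts_def)
    have "gc E S {} < gc E S C" using g_strict[OF fin cSE(1) CS] C(1)
      unfolding nontrivial_cut_def by blast
    moreover have "gc E S C < gc E S E" using g_strict[OF fin CS cSE(2)] C(1) CE
      unfolding nontrivial_cut_def by blast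
    ultimately show "card (sccs E S) \<ge> 2" using g_E[of E S] g_empty[of E S] by simp
  next
    assume c2: "card (sccs E S) \<ge> 2"
    show "possibly E R b"
    proof (rule ccontr)
      assume np: "\<not> possibly E R b"
      have "\<not> (\<exists>D'\<in>cuts E S. {} \<subset> D' \<and> D' \<subset> E)"
      proof
        assume "\<exists>D'\<in>cuts E S. {} \<subset> D' \<and> D' \<subset> E"
        then obtain D' where "D' \<in> K" "D' \<noteq> {}" "D' \<noteq> E" using cS by blast
        then have "nontrivial_cut E R D' \<and> b D'" unfolding K_def by blast
        then show False using np unfolding possibly_def by blast
      qed
      then have "gc E S E = Suc (gc E S {})" using g_cover[OF fin SE cSE(1,2) E0] by blast
      then show False using c2 g_E[of E S] g_empty[of E S] by simp
    qed
  qed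

  have P2: "invariant E R b \<longleftrightarrow> cuts E S = cuts E R"
  proof
    assume inv: "invariant E R b"
    have "cuts E R \<subseteq> K"
    proof
      fix C assume C: "C \<in> cuts E R"
      show "C \<in> K"
      proof (cases "C = {} \<or> C = E")
        case True then show ?thesis unfolding K_def by blast
      next
        case False
        then have "nontrivial_cut E R C" using C unfolding nontrivial_cut_def by blast
        then show ?thesis using inv unfolding K_def invariant_def by blast
      qed
    qed
    then show "cuts E S = cuts E R" using KR cS by blast
  next
    assume eq: "cuts E S = cuts E R"
    show "invariant E R b" unfolding invariant_def
    proof (intro allI impI)
      fix C assume C: "nontrivial_cut E R C"
      then have "C \<in> K" using eq cS unfolding nontrivial_cut_def by blast
      then show "b C" using C unfolding K_def nontrivial_cut_def by blast
    qed
  qed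

  have P3: "controllable E R b \<longleftrightarrow> card (sccs E S) = card (sccs E R)"
  proof
    assume "controllable E R b"
    then obtain Cs where mc: "maximal_chain E R Cs"
      and bC: "\<forall>j < length Cs. Cs ! j \<noteq> {} \<and> Cs ! j \<noteq> E \<longrightarrow> b (Cs ! j)"
      unfolding controllable_def by blast
    have inS: "Cs ! j \<in> cuts E S" if j: "j < length Cs" for j
    proof -
      have "Cs ! j \<in> cuts E R" using mc j unfolding maximal_chain_def by blast
      then have "Cs ! j \<in> K" using bC j unfolding K_def nontrivial_cut_def by blast
      then show ?thesis using cS by simp
    qed
    have ne: "Cs \<noteq> []" and h: "hd Cs = {}" and l: "last Cs = E"
      and st: "\<forall>j. Suc j < length Cs \<longrightarrow> Cs ! j \<subset> Cs ! Suc j \<and>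
          \<not> (\<exists>D\<in>cuts E R. Cs ! j \<subset> D \<and> D \<subset> Cs ! Suc j)"
      using mc unfolding maximal_chain_def by simp_all
    have SR: "cuts E S \<subseteq> cuts E R" using KR cS by simp
    have st2: "\<forall>j. Suc j < length Cs \<longrightarrow> Cs ! j \<subset> Cs ! Suc j \<and>
          \<not> (\<exists>D\<in>cuts E S. Cs ! j \<subset> D \<and> D \<subset> Cs ! Suc j)"
    proof (intro allI impI)
      fix j assume "Suc j < length Cs"
      then have "Cs ! j \<subset> Cs ! Suc j \<and>
          \<not> (\<exists>D\<in>cuts E R. Cs ! j \<subset> D \<and> D \<subset> Cs ! Suc j)" using st by simp
      then show "Cs ! j \<subset> Cs ! Suc j \<and>
          \<not> (\<exists>D\<in>cuts E S. Cs ! j \<subset> D \<and> D \<subset> Cs ! Suc j)" using SR by blast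
    qed
    have "maximal_chain E S Cs"
      unfolding maximal_chain_def using ne h l inS st2 by simp
    then have "length Cs = Suc (card (sccs E S))" by (rule chain_len[OF fin SE])
    moreover have "length Cs = Suc (card (sccs E R))" using mc by (rule chain_len[OF fin RE])
    ultimately show "card (sccs E S) = card (sccs E R)" by simp
  next
    assume eqc: "card (sccs E S) = card (sccs E R)"
    obtain Cs where mc: "maximal_chain E S Cs" using chain_exists[OF fin SE] by blast
    have len: "length Cs = Suc (card (sccs E R))" using chain_len[OF fin SE mc] eqc by simp
    have ne: "Cs \<noteq> []" and h: "hd Cs = {}" and l: "last Cs = E"
      and c: "\<forall>j < length Cs. Cs ! j \<in> cuts E S"
      and st: "\<forall>j. Suc j < length Cs \<longrightarrow> Cs ! j \<subset> Cs ! Suc j \<and>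
          \<not> (\<exists>D\<in>cuts E S. Cs ! j \<subset> D \<and> D \<subset> Cs ! Suc j)"
      using mc unfolding maximal_chain_def by blast+
    have cR: "\<forall>j < length Cs. Cs ! j \<in> cuts E R" using c cS KR by blast
    have stR: "\<forall>j. Suc j < length Cs \<longrightarrow> Cs ! j \<subset> Cs ! Suc j" using st by blast
    have nbR: "\<not> (\<exists>D\<in>cuts E R. Cs ! j \<subset> D \<and> D \<subset> Cs ! Suc j)" if j: "Suc j < length Cs" for j
    proof
      assume "\<exists>D\<in>cuts E R. Cs ! j \<subset> D \<and> D \<subset> Cs ! Suc j"
      then obtain D where D: "D \<in> cuts E R" "Cs ! j \<subset> D" "D \<subset> Cs ! Suc j" by blast
      have "length Cs \<le> card (sccs E R)"
        by (rule chain_bound[OF fin ne h l cR stR j D])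
      then show False using len by simp
    qed
    have st3: "\<forall>j. Suc j < length Cs \<longrightarrow> Cs ! j \<subset> Cs ! Suc j \<and>
          \<not> (\<exists>D\<in>cuts E R. Cs ! j \<subset> D \<and> D \<subset> Cs ! Suc j)"
      using stR nbR by simp
    have "maximal_chain E R Cs" unfolding maximal_chain_def
      using ne h l cR st3 by simp
    moreover have "\<forall>j < length Cs. Cs ! j \<noteq> {} \<and> Cs ! j \<noteq> E \<longrightarrow> b (Cs ! j)"
    proof (intro allI impI)
      fix j assume j: "j < length Cs" and nt: "Cs ! j \<noteq> {} \<and> Cs ! j \<noteq> E"
      have "Cs ! j \<in> K" using c j cS by blast
      then show "b (Cs ! j)" using nt unfolding K_def by blast
    qed
    ultimately show "controllable E R b" unfolding controllable_def by blast
  qed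
  show ?thesis using P1 P2 P3 by blast
qed

end
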